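(* Let $G$ and $H$ be finite abelian groups, written additively, of the same even order $k$, and let $f:G\to H$ be semi-planar. If $S(G,H;f)$ splits into two substructures, then each of the two substructures is divisible.
   Context: A function $f:G\to H$ is semi-planar if for every non-identity $a\in G$ and every $y\in H$, the equation $f(x+a)-f(x)=y$ has either $0$ or $2$ solutions $x\in G$. The incidence structure $S(G,H;f)$ has points $(x,y)\in G\times H$ and lines $\mathcal{L}(a,b)$ for $(a,b)\in G\times H$, with $(x,y)$ incident with $\mathcal{L}(a,b)$ iff $y=f(x-a)+b$. Its incidence graph is the bipartite graph on points and lines with an edge for each incident point-line pair. $S(G,H;f)$ splits into two substructures if its incidence graph has exactly two connected components; the substructures are the incidence structures formed by the points and lines of each component (each consists of $k^2/2$ points and $k^2/2$ lines). An incidence structure is divisible if its points can be partitioned into classes such that two distinct points from the same class lie on no common line and two points from different classes lie on exactly two common lines. *)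

theory Defs
  imports Main "HOL-Library.Disjoint_Sets"
begin

definition semi_planar :: "('a::{finite,ab_group_add} \<Rightarrow> 'b::{finite,ab_group_add}) \<Rightarrow> bool" where
  "semi_planar f \<longleftrightarrow>
     (\<forall>a. a \<noteq> 0 \<longrightarrow> (\<forall>y. card {x. f (x + a) - f x = y} \<in> {0, 2}))"

definition incident :: "('a::ab_group_add \<Rightarrow> 'b::ab_group_add) \<Rightarrow> 'a \<times> 'b \<Rightarrow> 'a \<times> 'b \<Rightarrow> bool" where
  "incident f p L \<longleftrightarrow> snd p = f (fst p - fst L) + snd L"

definition inc_edge :: "('a::ab_group_add \<Rightarrow> 'b::ab_group_add) \<Rightarrow>
    ('a \<times> 'b) + ('a \<times> 'b) \<Rightarrow> ('a \<times> 'b) + ('a \<times> 'b) \<Rightarrow> bool" where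
  "inc_edge f u v \<longleftrightarrow>
     (\<exists>p L. (u = Inl p \<and> v = Inr L \<or> u = Inr L \<and> v = Inl p) \<and> incident f p L)"

definition inc_components :: "('a::ab_group_add \<Rightarrow> 'b::ab_group_add) \<Rightarrow>
    (('a \<times> 'b) + ('a \<times> 'b)) set set" where
  "inc_components f = UNIV // {(u, v). (inc_edge f)\<^sup>*\<^sup>* u v}"

definition splits_into_two :: "('a::ab_group_add \<Rightarrow> 'b::ab_group_add) \<Rightarrow> bool" where
  "splits_into_two f \<longleftrightarrow> card (inc_components f) = 2"

definition divisible :: "'p set \<Rightarrow> 'l set \<Rightarrow> ('p \<Rightarrow> 'l \<Rightarrow> bool) \<Rightarrow> bool" where
  "divisible P B I \<longleftrightarrow>
     (\<exists>C. partition_on P C \<and>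
        (\<forall>c\<in>C. \<forall>p\<in>c. \<forall>q\<in>c. p \<noteq> q \<longrightarrow> {L\<in>B. I p L \<and> I q L} = {}) \<and>
        (\<forall>c\<in>C. \<forall>d\<in>C. c \<noteq> d \<longrightarrow> (\<forall>p\<in>c. \<forall>q\<in>d. card {L\<in>B. I p L \<and> I q L} = 2)))"

definition sub_divisible :: "('a::ab_group_add \<Rightarrow> 'b::ab_group_add) \<Rightarrow>
    (('a \<times> 'b) + ('a \<times> 'b)) set \<Rightarrow> bool" where
  "sub_divisible f K \<longleftrightarrow> divisible {p. Inl p \<in> K} {L. Inr L \<in> K} (incident f)"

end

theory Submission
  imports Defs "HOL-Library.Product_Plus"
begin

lemma inc_edge_sym: "inc_edge f u v \<Longrightarrow> inc_edge f v u"
  unfolding inc_edge_def by blast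

lemma reach_sym: "(inc_edge f)\<^sup>*\<^sup>* u v \<Longrightarrow> (inc_edge f)\<^sup>*\<^sup>* v u"
  by (induction rule: rtranclp_induct)
     (auto intro: converse_rtranclp_into_rtranclp inc_edge_sym)

lemma edge_tr:
  fixes f :: "'a::ab_group_add \<Rightarrow> 'b::ab_group_add"
  assumes "inc_edge f u v"
  shows "inc_edge f (map_sum (\<lambda>p. p + t) (\<lambda>p. p + t) u) (map_sum (\<lambda>p. p + t) (\<lambda>p. p + t) v)"
proof -
  obtain p L where h: "(u = Inl p \<and> v = Inr L \<or> u = Inr L \<and> v = Inl p)" "incident f p L"
    using assms unfolding inc_edge_def by blast
  have "incident f (p+t) (L+t)" using h(2) by (simp add: incident_def algebra_simps)
  then show ?thesis using h(1) unfolding inc_edge_def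
    by (elim disjE conjE) (rule exI[of _ "p+t"], rule exI[of _ "L+t"], simp)+
qed

lemma reach_tr:
  fixes f :: "'a::ab_group_add \<Rightarrow> 'b::ab_group_add"
  assumes "(inc_edge f)\<^sup>*\<^sup>* u v"
  shows "(inc_edge f)\<^sup>*\<^sup>* (map_sum (\<lambda>p. p + t) (\<lambda>p. p + t) u) (map_sum (\<lambda>p. p + t) (\<lambda>p. p + t) v)"
  using assms
  by (induction rule: rtranclp_induct) (auto intro: rtranclp.rtrancl_into_rtrancl edge_tr)

lemma reach_pts:
  fixes f :: "'a::ab_group_add \<Rightarrow> 'b::ab_group_add"
  shows "(inc_edge f)\<^sup>*\<^sup>* (Inl p) (Inl q) \<longleftrightarrow> (inc_edge f)\<^sup>*\<^sup>* (Inl 0) (Inl (q - p))"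
proof
  assume "(inc_edge f)\<^sup>*\<^sup>* (Inl p) (Inl q)"
  from reach_tr[OF this, of "-p"] show "(inc_edge f)\<^sup>*\<^sup>* (Inl 0) (Inl (q - p))" by simp
next
  assume "(inc_edge f)\<^sup>*\<^sup>* (Inl 0) (Inl (q - p))"
  from reach_tr[OF this, of "p"] show "(inc_edge f)\<^sup>*\<^sup>* (Inl p) (Inl q)" by simp
qed

lemma line_pt: "inc_edge f (Inr L) (Inl (fst L, f 0 + snd L))"
  unfolding inc_edge_def incident_def by auto

lemma Lset_card:
  fixes f :: "'a::{finite,ab_group_add} \<Rightarrow> 'b::{finite,ab_group_add}"
  shows "card {L. incident f p L \<and> incident f q L} =
         card {u. f (u + (fst q - fst p)) - f u = snd q - snd p}"
proof -
  have "{L. incident f p L \<and> incident f q L} =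
        (\<lambda>u. (fst p - u, snd p - f u)) ` {u. f (u + (fst q - fst p)) - f u = snd q - snd p}"
  proof (rule set_eqI, rule iffI)
    fix L assume "L \<in> {L. incident f p L \<and> incident f q L}"
    then have h: "snd p = f (fst p - fst L) + snd L" "snd q = f (fst q - fst L) + snd L"
      unfolding incident_def by auto
    show "L \<in> (\<lambda>u. (fst p - u, snd p - f u)) ` {u. f (u + (fst q - fst p)) - f u = snd q - snd p}"
      apply (rule image_eqI[where x="fst p - fst L"])
      using h by (auto simp: algebra_simps prod_eq_iff)
  next
    fix L assume "L \<in> (\<lambda>u. (fst p - u, snd p - f u)) ` {u. f (u + (fst q - fst p)) - f u = snd q - snd p}"
    then show "L \<in> {L. incident f p L \<and> incident f q L}"
      unfolding incident_def by (auto simp: algebra_simps)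
  qed
  moreover have "inj (\<lambda>u. (fst p - u, snd p - f u))"
    by (auto simp: inj_def)
  ultimately show ?thesis by (simp add: card_image inj_on_subset)
qed

lemma fiber_count:
  fixes g :: "'a::finite \<Rightarrow> 'b::finite"
  assumes "\<forall>y. card {x. g x = y} \<in> {0, 2}"
  shows "2 * card {e. card {u. g u = e} = 2} = card (UNIV::'a set)"
proof -
  have "(UNIV::'a set) = (\<Union>e. {u. g u = e})" by auto
  then have "card (UNIV::'a set) = card (\<Union>e. {u. g u = e})" by simp
  also have "\<dots> = (\<Sum>e\<in>UNIV. card {u. g u = e})"
    by (rule card_UN_disjoint) auto
  also have "\<dots> = (\<Sum>e\<in>{e. card {u. g u = e} = 2}. card {u. g u = e})"
    by (rule sum.mono_neutral_right) (use assms in auto)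
  also have "\<dots> = (\<Sum>e\<in>{e. card {u. g u = e} = 2}. 2)"
    by (rule sum.cong) auto
  finally show ?thesis by simp
qed

theorem theorem1:
  fixes f :: "'a::{finite,ab_group_add} \<Rightarrow> 'b::{finite,ab_group_add}"
  assumes "card (UNIV::'a set) = card (UNIV::'b set)"
    and "even (card (UNIV::'a set))"
    and "semi_planar f"
    and "splits_into_two f"
  shows "\<forall>K \<in> inc_components f. sub_divisible f K"
proof
  define k where "k = card (UNIV::'a set)"
  have kpos: "k > 0" unfolding k_def by (simp add: card_gt_0_iff)
  define R where "R = (inc_edge f)\<^sup>*\<^sup>*"
  define T where "T = {t. R (Inl 0) (Inl t)}"
  have Riff: "\<And>p q. R (Inl p) (Inl q) \<longleftrightarrow> q - p \<in> T"
    unfolding T_def R_def using reach_pts by blast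
  have Rsym: "\<And>u v. R u v \<Longrightarrow> R v u" unfolding R_def by (rule reach_sym)
  have Rtrans: "\<And>u v w. R u v \<Longrightarrow> R v w \<Longrightarrow> R u w" unfolding R_def by auto
  have Rrefl: "\<And>u. R u u" unfolding R_def by auto
  have Redge: "\<And>u v. inc_edge f u v \<Longrightarrow> R u v" unfolding R_def by auto
  have comp_form: "\<exists>p0. K = {v. R (Inl p0) v}" if "K \<in> inc_components f" for K
  proof -
    from that obtain u where K: "K = {v. R u v}"
      unfolding inc_components_def R_def quotient_def by auto
    obtain p0 where "R u (Inl p0)"
    proof (cases u)
      case (Inl p) then show ?thesis using that Rrefl by blast
    next
      case (Inr L) then show ?thesis using that Redge line_pt by blast
    qed
    note h = this
    have "K = {v. R (Inl p0) v}" unfolding K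
      using Rtrans[OF Rsym[OF h]] Rtrans[OF h] by blast
    then show ?thesis by blast
  qed
  have Pcard: "card {p. R (Inl p0) (Inl p)} = card T" for p0
  proof -
    have "{p. R (Inl p0) (Inl p)} = (\<lambda>t. p0 + t) ` T"
    proof (rule set_eqI, rule iffI)
      fix p assume "p \<in> {p. R (Inl p0) (Inl p)}"
      then have "p - p0 \<in> T" using Riff by blast
      moreover have "p = p0 + (p - p0)" by simp
      ultimately show "p \<in> (\<lambda>t. p0 + t) ` T" by (rule rev_image_eqI)
    next
      fix p assume "p \<in> (\<lambda>t. p0 + t) ` T"
      then show "p \<in> {p. R (Inl p0) (Inl p)}" using Riff by auto
    qed
    moreover have "inj (\<lambda>t. p0 + t)" by (auto simp: inj_def)
    ultimately show ?thesis by (simp add: card_image inj_on_subset)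
  qed
  have Tbound: "2 * card T \<le> k * k"
  proof -
    obtain K1 K2 where KK: "inc_components f = {K1, K2}" "K1 \<noteq> K2"
      using assms(4) unfolding splits_into_two_def card_2_iff by blast
    obtain p1 where p1: "K1 = {v. R (Inl p1) v}" using comp_form KK by blast
    obtain p2 where p2: "K2 = {v. R (Inl p2) v}" using comp_form KK by blast
    have disj: "{p. R (Inl p1) (Inl p)} \<inter> {p. R (Inl p2) (Inl p)} = {}"
    proof (rule ccontr)
      assume "{p. R (Inl p1) (Inl p)} \<inter> {p. R (Inl p2) (Inl p)} \<noteq> {}"
      then obtain p where "R (Inl p1) (Inl p)" "R (Inl p2) (Inl p)" by blast
      then have h12: "R (Inl p1) (Inl p2)" using Rsym Rtrans by metis
      have "K1 = K2" unfolding p1 p2 using Rtrans[OF h12] Rtrans[OF Rsym[OF h12]] by blast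
      with KK show False by simp
    qed
    have "2 * card T = card ({p. R (Inl p1) (Inl p)} \<union> {p. R (Inl p2) (Inl p)})"
      using card_Un_disjoint[OF _ _ disj] Pcard by simp
    also have "\<dots> \<le> card (UNIV :: ('a \<times> 'b) set)" by (rule card_mono) auto
    also have "\<dots> = card (UNIV::'a set) * card (UNIV::'b set)"
      by (simp add: UNIV_Times_UNIV[symmetric] card_cartesian_product del: UNIV_Times_UNIV)
    also have "\<dots> = k * k" unfolding k_def using assms(1) by simp
    finally show ?thesis .
  qed
  define S where "S = {h. (0, h) \<in> T}"
  have TS: "card T \<le> k * card S"
  proof -
    define hg where "hg g = (SOME h. (g, h) \<in> T)" for g
    define \<phi> where "\<phi> t = (fst t, snd t - hg (fst t))" for t :: "'a \<times> 'b"
    have "inj_on \<phi> T" unfolding \<phi>_def inj_on_def by (auto simp: prod_eq_iff)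
    moreover have "\<phi> ` T \<subseteq> UNIV \<times> S"
    proof
      fix w assume "w \<in> \<phi> ` T"
      then obtain t where t: "t \<in> T" "w = \<phi> t" by blast
      have "(fst t, hg (fst t)) \<in> T" unfolding hg_def
        by (rule someI[of _ "snd t"]) (use t in simp)
      then have a: "R (Inl 0) (Inl (fst t, hg (fst t)))" using Riff[of 0] by simp
      have b: "R (Inl 0) (Inl t)" using Riff[of 0] t(1) by simp
      have "R (Inl (fst t, hg (fst t))) (Inl t)" by (rule Rtrans[OF Rsym[OF a] b])
      then have "t - (fst t, hg (fst t)) \<in> T" using Riff by blast
      moreover have "t - (fst t, hg (fst t)) = (0, snd t - hg (fst t))" by (simp add: prod_eq_iff)
      ultimately show "w \<in> UNIV \<times> S" unfolding t(2) \<phi>_def S_def by simp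
    qed
    ultimately have "card T \<le> card ((UNIV::'a set) \<times> S)"
      by (rule card_inj_on_le) auto
    also have "\<dots> = k * card S" unfolding k_def by (simp add: card_cartesian_product)
    finally show ?thesis .
  qed
  fix K assume K: "K \<in> inc_components f"
  then obtain p0 where K0: "K = {v. R (Inl p0) v}" using comp_form by blast
  define P where "P = {p. R (Inl p0) (Inl p)}"
  have PK: "{p. Inl p \<in> K} = P" unfolding P_def K0 by simp
  have key: "card {L. incident f p L \<and> incident f q L} = 2"
    if pP: "p \<in> P" and qP: "q \<in> P" and ne: "fst p \<noteq> fst q" for p q
  proof -
    define U where "U q = {u. f (u + (fst q - fst p)) - f u = snd q - snd p}" for q
    have Lc: "card {L. incident f p L \<and> incident f q L} = card (U q)" for q
      unfolding U_def by (rule Lset_card)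
    have Lne: "{L. incident f p L \<and> incident f q L} \<noteq> {} \<longleftrightarrow> card (U q) \<noteq> 0" for q
      unfolding Lc[symmetric] by (simp add: card_eq_0_iff)
    define B2 where "B2 = {q. q \<noteq> p \<and> {L. incident f p L \<and> incident f q L} \<noteq> {}}"
    define A where "A = {q \<in> P. fst q \<noteq> fst p}"
    define W where "W = Sigma (UNIV - {0}) (\<lambda>d. {e. card {u. f (u + d) - f u = e} = 2})"
    have sp: "card {u. f (u + d) - f u = e} \<in> {0, 2}" if "d \<noteq> 0" for d e
      using assms(3) that unfolding semi_planar_def by blast
    have B2W: "B2 = (\<lambda>w. p + w) ` W"
    proof (rule set_eqI)
      fix q
      have qp: "q - p = (fst q - fst p, snd q - snd p)" by (simp add: prod_eq_iff)
      have "q \<in> B2 \<longleftrightarrow> q - p \<in> W"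
      proof (cases "fst q = fst p")
        case True
        then have "q \<noteq> p \<longrightarrow> U q = {}" unfolding U_def by (auto simp: prod_eq_iff)
        then have "q \<notin> B2" unfolding B2_def using Lne[of q] by auto
        moreover have "q - p \<notin> W" unfolding W_def qp using True by simp
        ultimately show ?thesis by simp
      next
        case False
        have "q \<in> B2 \<longleftrightarrow> card (U q) \<noteq> 0" unfolding B2_def using Lne[of q] False by auto
        also have "\<dots> \<longleftrightarrow> card (U q) = 2"
        proof -
          have "fst q - fst p \<noteq> 0" using False by simp
          then have "card (U q) \<in> {0, 2}" unfolding U_def by (rule sp)
          then show ?thesis by auto
        qed
        also have "\<dots> \<longleftrightarrow> q - p \<in> W" unfolding W_def U_def qp using False by simp
        finally show ?thesis .
      qed
      moreover have "q \<in> (\<lambda>w. p + w) ` W \<longleftrightarrow> q - p \<in> W"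
      proof
        assume "q - p \<in> W"
        moreover have "q = p + (q - p)" by simp
        ultimately show "q \<in> (\<lambda>w. p + w) ` W" by (rule rev_image_eqI)
      qed auto
      ultimately show "q \<in> B2 \<longleftrightarrow> q \<in> (\<lambda>w. p + w) ` W" by simp
    qed
    have "2 * card W = (\<Sum>d\<in>UNIV - {0}. 2 * card {e. card {u. f (u + d) - f u = e} = 2})"
      unfolding W_def by (simp add: card_SigmaI sum_distrib_left)
    also have "\<dots> = (\<Sum>d\<in>UNIV - {0::'a}. k)"
    proof (rule sum.cong)
      fix d :: 'a assume "d \<in> UNIV - {0}"
      then show "2 * card {e. card {u. f (u + d) - f u = e} = 2} = k"
        unfolding k_def by (intro fiber_count) (use sp in auto)
    qed simp
    also have "\<dots> = (k - 1) * k" unfolding k_def by (simp add: card_Diff_singleton)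
    finally have cW: "2 * card W = (k - 1) * k" .
    have cB2: "2 * card B2 = (k - 1) * k"
      unfolding B2W using cW by (simp add: card_image inj_on_def)
    have B2A: "B2 \<subseteq> A"
    proof
      fix q assume "q \<in> B2"
      then obtain L where q: "q \<noteq> p" "incident f p L" "incident f q L" unfolding B2_def by blast
      have "inc_edge f (Inl p) (Inr L)" "inc_edge f (Inr L) (Inl q)"
        using q unfolding inc_edge_def by blast+
      then have "R (Inl p) (Inr L)" "R (Inr L) (Inl q)" using Redge by blast+
      then have "R (Inl p) (Inl q)" by (rule Rtrans)
      then have "q \<in> P" using pP unfolding P_def using Rtrans by blast
      moreover have "fst q \<noteq> fst p"
      proof
        assume "fst q = fst p"
        with q have "snd q = snd p" unfolding incident_def by simp
        with \<open>fst q = fst p\<close> q(1) show False by (simp add: prod_eq_iff)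
      qed
      ultimately show "q \<in> A" unfolding A_def by simp
    qed
    have same: "{q \<in> P. fst q = fst p} = (\<lambda>h. p + (0, h)) ` S"
    proof (rule set_eqI, rule iffI)
      fix q assume q: "q \<in> {q \<in> P. fst q = fst p}"
      then have "R (Inl p) (Inl q)" using pP unfolding P_def using Rtrans[OF Rsym] by blast
      then have "q - p \<in> T" using Riff by blast
      moreover have "q - p = (0, snd q - snd p)" using q by (simp add: prod_eq_iff)
      ultimately have "snd q - snd p \<in> S" unfolding S_def by simp
      moreover have "q = p + (0, snd q - snd p)" using q by (simp add: prod_eq_iff)
      ultimately show "q \<in> (\<lambda>h. p + (0, h)) ` S" by blast
    next
      fix q assume "q \<in> (\<lambda>h. p + (0, h)) ` S"
      then obtain h where h: "h \<in> S" "q = p + (0, h)" by blast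
      have "R (Inl p) (Inl q)" using Riff h unfolding S_def by simp
      then show "q \<in> {q \<in> P. fst q = fst p}" using pP h(2) unfolding P_def using Rtrans by auto
    qed
    have cs: "card {q \<in> P. fst q = fst p} = card S"
      unfolding same by (simp add: card_image inj_on_def)
    have Pu: "P = A \<union> {q \<in> P. fst q = fst p}" and di: "A \<inter> {q \<in> P. fst q = fst p} = {}"
      unfolding A_def by auto
    have "card P = card A + card {q \<in> P. fst q = fst p}"
      by (subst Pu, rule card_Un_disjoint) (use di in auto)
    moreover have "card P = card T" unfolding P_def by (rule Pcard)
    ultimately have cA: "card A + card S = card T" using cs by simp
    have "k * card A + k * card S = k * card T" using cA by (metis add_mult_distrib2)
    then have "k * card A + card T \<le> k * card T" using TS by linarith
    then have "k * card A \<le> (k - 1) * card T" by (simp add: diff_mult_distrib)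
    then have "2 * (k * card A) \<le> (k - 1) * (2 * card T)" by simp
    also have "\<dots> \<le> (k - 1) * (k * k)" using Tbound by simp
    finally have "k * (2 * card A) \<le> k * ((k - 1) * k)" by (simp add: ac_simps)
    then have "2 * card A \<le> (k - 1) * k" using kpos by simp
    then have "card A \<le> card B2" using cB2 by simp
    then have "B2 = A" using B2A by (intro card_seteq) auto
    moreover have "q \<in> A" unfolding A_def using qP ne by simp
    ultimately have "q \<in> B2" by simp
    then have "card (U q) \<noteq> 0" unfolding B2_def using Lne[of q] by auto
    moreover have "card (U q) \<in> {0, 2}" unfolding U_def by (rule sp) (use ne in simp)
    ultimately have "card (U q) = 2" by auto
    then show ?thesis using Lc by simp
  qed
  have inK: "{L. Inr L \<in> K \<and> incident f p L \<and> incident f q L} = {L. incident f p L \<and> incident f q L}"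
    if "p \<in> P" for p q
  proof -
    have "R (Inl p0) (Inr L)" if "incident f p L" for L
    proof -
      have "inc_edge f (Inl p) (Inr L)" using that unfolding inc_edge_def by blast
      then have "R (Inl p) (Inr L)" by (rule Redge)
      then show ?thesis using \<open>p \<in> P\<close> Rtrans unfolding P_def by blast
    qed
    then show ?thesis unfolding K0 by auto
  qed
  define C where "C = (\<lambda>x. {q \<in> P. fst q = x}) ` (fst ` P)"
  have part: "partition_on P C"
    unfolding partition_on_def C_def disjoint_def by auto
  show "sub_divisible f K"
    unfolding sub_divisible_def divisible_def PK
  proof (intro exI[of _ C] conjI ballI impI)
    show "partition_on P C" by (rule part)
  next
    fix c p q assume "c \<in> C" "p \<in> c" "q \<in> c" "p \<noteq> q"
    then have "fst p = fst q" "p \<in> P" unfolding C_def by auto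
    with \<open>p \<noteq> q\<close> show "{L \<in> {L. Inr L \<in> K}. incident f p L \<and> incident f q L} = {}"
      unfolding incident_def by (auto simp: prod_eq_iff)
  next
    fix c d p q assume cd: "c \<in> C" "d \<in> C" "c \<noteq> d" "p \<in> c" "q \<in> d"
    then have "fst p \<noteq> fst q" "p \<in> P" "q \<in> P" unfolding C_def by auto
    then show "card {L \<in> {L. Inr L \<in> K}. incident f p L \<and> incident f q L} = 2"
      using key inK[of p q] by simp
  qed
qed

end
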